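(* Let $\delta>0$. In the multidimensional knapsack problem, if $q_{\max}:=\max_{i,j}w_{ij}/B_j\le\delta/m$, then the deterministic rounding algorithm returns an integral allocation $x$ satisfying $\sum_ix_iv_i\ge(1-\delta)\sum_ix_i^*v_i$ (and $\sum_iw_{ij}x_i\le B_j$ for all $j$).
   Context: Multidimensional knapsack: a finite set of items $i$, each with value $v_i\ge0$ and weight vector $(w_{i1},\dots,w_{im})\in\mathbb{R}_+^m$, and capacities $B_1,\dots,B_m>0$. The LP relaxation maximizes $\sum_iv_ix_i$ subject to $0\le x_i\le1$ for all $i$ and $\sum_iw_{ij}x_i\le B_j$ for all $j$. Deterministic rounding algorithm: compute a basic (vertex) optimal solution $x^*$ of this LP, and output $x_i=1$ if $x_i^*=1$ and $x_i=0$ otherwise. *)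

theory Defs
  imports "HOL-Analysis.Analysis"
begin

text \<open>Items are indexed by a finite type 'n, the
  m resource constraints by a finite type 'm (so m = CARD('m)).
  v i = value of item i, w i j = weight of item i in dimension j, B j = capacity.\<close>

definition knapsack_LP_polytope ::
  "('n::finite \<Rightarrow> 'm::finite \<Rightarrow> real) \<Rightarrow> ('m \<Rightarrow> real) \<Rightarrow> (real ^ 'n) set" where
  "knapsack_LP_polytope w B =
     {x. (\<forall>i. 0 \<le> x $ i \<and> x $ i \<le> 1) \<and> (\<forall>j. (\<Sum>i\<in>UNIV. w i j * x $ i) \<le> B j)}"

definition LP_value :: "('n::finite \<Rightarrow> real) \<Rightarrow> real ^ 'n \<Rightarrow> real" where
  "LP_value v x = (\<Sum>i\<in>UNIV. v i * x $ i)"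

definition basic_optimal_solution ::
  "('n::finite \<Rightarrow> real) \<Rightarrow> ('n \<Rightarrow> 'm::finite \<Rightarrow> real) \<Rightarrow> ('m \<Rightarrow> real) \<Rightarrow> real ^ 'n \<Rightarrow> bool" where
  "basic_optimal_solution v w B xs \<longleftrightarrow>
     xs extreme_point_of knapsack_LP_polytope w B \<and>
     (\<forall>y \<in> knapsack_LP_polytope w B. LP_value v y \<le> LP_value v xs)"

definition round_down :: "real ^ 'n \<Rightarrow> 'n \<Rightarrow> real" where
  "round_down xs i = (if xs $ i = 1 then 1 else 0)"

end

theory Submission
  imports Defs
begin

lemma kernel_vec:
  fixes w :: "'n::finite \<Rightarrow> 'm::finite \<Rightarrow> real" and F :: "'n set"
  assumes "card F > CARD('m)"
  shows "\<exists>d::real^'n. d \<noteq> 0 \<and> (\<forall>i. i \<notin> F \<longrightarrow> d$i = 0) \<and> (\<forall>j. (\<Sum>i\<in>UNIV. w i j * d$i) = 0)"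
proof -
  define u where "u i = (\<chi> j. w i j)" for i
  show ?thesis
  proof (cases "inj_on u F")
    case False
    then obtain i k where ik: "i \<in> F" "k \<in> F" "i \<noteq> k" "u i = u k" unfolding inj_on_def by blast
    have wik: "w i j = w k j" for j using ik(4) unfolding u_def by (metis vec_lambda_beta)
    define d :: "real^'n" where "d = axis i 1 - axis k 1"
    have "d $ i = 1" using ik by (simp add: d_def axis_def)
    hence "d \<noteq> 0" by auto
    moreover have "\<forall>i'. i' \<notin> F \<longrightarrow> d$i' = 0" using ik by (auto simp: d_def axis_def)
    moreover have "(\<Sum>i'\<in>UNIV. w i' j * d$i') = 0" for j
    proof -
      have "(\<Sum>i'\<in>UNIV. w i' j * d$i') = (\<Sum>i'\<in>UNIV. (if i' = i then w i j else 0)) - (\<Sum>i'\<in>UNIV. (if i' = k then w k j else 0))"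
        unfolding sum_subtractf[symmetric] by (rule sum.cong) (auto simp: d_def axis_def)
      also have "\<dots> = 0" using wik by simp
      finally show ?thesis .
    qed
    ultimately show ?thesis by blast
  next
    case True
    have fin: "finite (u ` F)" by simp
    have "card (u ` F) = card F" using True by (simp add: card_image)
    hence "\<not> independent (u ` F)"
    proof (intro notI)
      assume "independent (u ` F)"
      from independent_bound[OF this] have "card (u ` F) \<le> CARD('m)" by simp
      thus False using assms \<open>card (u ` F) = card F\<close> by simp
    qed
    then obtain c where c: "\<exists>v\<in>u ` F. c v \<noteq> 0" "(\<Sum>v\<in>u ` F. c v *\<^sub>R v) = 0"
      using real_vector.dependent_finite[OF fin] by blast
    define d :: "real^'n" where "d = (\<chi> i. if i \<in> F then c (u i) else 0)"
    from c(1) obtain i0 where "i0 \<in> F" "c (u i0) \<noteq> 0" by blast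
    hence "d $ i0 \<noteq> 0" by (simp add: d_def)
    hence "d \<noteq> 0" by auto
    moreover have "\<forall>i'. i' \<notin> F \<longrightarrow> d$i' = 0" by (auto simp: d_def)
    moreover have "(\<Sum>i'\<in>UNIV. w i' j * d$i') = 0" for j
    proof -
      have "(\<Sum>i'\<in>UNIV. w i' j * d$i') = (\<Sum>i'\<in>F. c (u i') * w i' j)"
        by (rule sum.mono_neutral_cong_right) (auto simp: d_def)
      also have "\<dots> = (\<Sum>i'\<in>F. c (u i') *\<^sub>R u i') $ j"
        by (simp add: u_def sum_component)
      also have "\<dots> = (\<Sum>v\<in>u ` F. c v *\<^sub>R v) $ j"
        using sum.reindex[OF True, of "\<lambda>v. c v *\<^sub>R v"] by simp
      also have "\<dots> = 0" using c(2) by simp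
      finally show ?thesis .
    qed
    ultimately show ?thesis by blast
  qed
qed

lemma frac_card:
  fixes w :: "'n::finite \<Rightarrow> 'm::finite \<Rightarrow> real" and B :: "'m \<Rightarrow> real" and xs :: "real^'n"
  assumes ext: "xs extreme_point_of {x. (\<forall>i. 0 \<le> x $ i \<and> x $ i \<le> 1) \<and> (\<forall>j. (\<Sum>i\<in>UNIV. w i j * x $ i) \<le> B j)}"
  shows "card {i. 0 < xs$i \<and> xs$i < 1} \<le> CARD('m)"
proof (rule ccontr)
  define F where "F = {i. 0 < xs$i \<and> xs$i < 1}"
  define S where "S = {x::real^'n. (\<forall>i. 0 \<le> x $ i \<and> x $ i \<le> 1) \<and> (\<forall>j. (\<Sum>i\<in>UNIV. w i j * x $ i) \<le> B j)}"
  assume "\<not> ?thesis"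
  hence "card F > CARD('m)" by (simp add: F_def)
  then obtain d :: "real^'n" where d: "d \<noteq> 0" "\<And>i. i \<notin> F \<Longrightarrow> d$i = 0" "\<And>j. (\<Sum>i\<in>UNIV. w i j * d$i) = 0"
    using kernel_vec[of F w] by blast
  have xsS: "xs \<in> S" using ext unfolding S_def extreme_point_of_def by blast
  have Fne: "F \<noteq> {}" using \<open>card F > CARD('m)\<close> by auto
  define \<eta> where "\<eta> = Min ((\<lambda>i. min (xs$i) (1 - xs$i)) ` F)"
  have eta_pos: "\<eta> > 0" unfolding \<eta>_def using Fne by (subst Min_gr_iff) (auto simp: F_def)
  have eta_le0: "\<eta> \<le> min (xs$i) (1 - xs$i)" if "i \<in> F" for i
    unfolding \<eta>_def using that by (intro Min_le) auto
  have eta_le: "\<eta> \<le> xs$i" "\<eta> \<le> 1 - xs$i" if "i \<in> F" for i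
    using eta_le0[OF that] by auto
  define D where "D = 1 + (\<Sum>i\<in>UNIV. \<bar>d$i\<bar>)"
  have Dpos: "D > 0" unfolding D_def by (smt (verit) sum_nonneg abs_ge_zero)
  have dD: "\<bar>d$i\<bar> \<le> D" for i
  proof -
    have "\<bar>d$i\<bar> \<le> (\<Sum>i\<in>UNIV. \<bar>d$i\<bar>)" by (rule member_le_sum) auto
    thus ?thesis unfolding D_def by simp
  qed
  define \<epsilon> where "\<epsilon> = \<eta> / D"
  have eps_pos: "\<epsilon> > 0" using eta_pos Dpos by (simp add: \<epsilon>_def)
  have small: "\<bar>\<epsilon> * d$i\<bar> \<le> \<eta>" for i
  proof -
    have "\<bar>\<epsilon> * d$i\<bar> = \<epsilon> * \<bar>d$i\<bar>" using eps_pos by (simp add: abs_mult)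
    also have "\<dots> \<le> \<epsilon> * D" using dD eps_pos by (simp add: mult_left_mono)
    also have "\<dots> = \<eta>" using Dpos by (simp add: \<epsilon>_def)
    finally show ?thesis .
  qed
  have inS: "xs + t *\<^sub>R d \<in> S" if "\<bar>t\<bar> = \<epsilon>" for t
  proof -
    have "0 \<le> xs$i + t * d$i \<and> xs$i + t * d$i \<le> 1" for i
    proof (cases "i \<in> F")
      case True
      have "\<bar>t * d$i\<bar> \<le> \<eta>" using small[of i] that by (simp add: abs_mult)
      thus ?thesis using eta_le[OF True] by (auto simp: abs_le_iff)
    next
      case False
      thus ?thesis using d(2)[OF False] xsS by (simp add: S_def)
    qed
    moreover have "(\<Sum>i\<in>UNIV. w i j * (xs$i + t * d$i)) \<le> B j" for j
    proof -
      have "(\<Sum>i\<in>UNIV. w i j * (xs$i + t * d$i)) = (\<Sum>i\<in>UNIV. w i j * xs$i) + t * (\<Sum>i\<in>UNIV. w i j * d$i)"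
        by (simp add: algebra_simps sum.distrib sum_distrib_left)
      thus ?thesis using d(3)[of j] xsS by (simp add: S_def)
    qed
    ultimately show ?thesis by (simp add: S_def)
  qed
  have a: "xs + \<epsilon> *\<^sub>R d \<in> S" using inS[of \<epsilon>] eps_pos by simp
  have b: "xs + (- \<epsilon>) *\<^sub>R d \<in> S" using inS[of "- \<epsilon>"] eps_pos by simp
  have neq: "xs + \<epsilon> *\<^sub>R d \<noteq> xs + (- \<epsilon>) *\<^sub>R d"
  proof
    assume "xs + \<epsilon> *\<^sub>R d = xs + (- \<epsilon>) *\<^sub>R d"
    hence e: "(xs + \<epsilon> *\<^sub>R d)$i = (xs + (- \<epsilon>) *\<^sub>R d)$i" for i by (rule arg_cong[where f="\<lambda>v. v$i"])
    have "d$i = 0" for i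
    proof -
      have "\<epsilon> * d$i = - \<epsilon> * d$i" using e[of i] by (simp only: vector_add_component vector_scaleR_component) simp
      hence "\<epsilon> * d$i = 0" by linarith
      thus ?thesis using eps_pos by simp
    qed
    hence "d = 0" by (simp add: vec_eq_iff)
    thus False using d(1) by simp
  qed
  have mid: "midpoint (xs + \<epsilon> *\<^sub>R d) (xs + (- \<epsilon>) *\<^sub>R d) = xs"
    by (simp add: midpoint_def vec_eq_iff field_simps)
  have "xs \<in> open_segment (xs + \<epsilon> *\<^sub>R d) (xs + (- \<epsilon>) *\<^sub>R d)"
    using midpoint_in_open_segment[of "xs + \<epsilon> *\<^sub>R d" "xs + (- \<epsilon>) *\<^sub>R d"] neq mid by (metis (no_types))
  thus False using ext a b unfolding extreme_point_of_def S_def by blast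
qed

theorem lemma4:
  fixes v :: "'n::finite \<Rightarrow> real" and w :: "'n \<Rightarrow> 'm::finite \<Rightarrow> real"
    and B :: "'m \<Rightarrow> real" and \<delta> :: real and xs :: "real ^ 'n"
  assumes "\<delta> > 0"
    and "\<forall>i. v i \<ge> 0"
    and "\<forall>i j. w i j \<ge> 0"
    and "\<forall>j. B j > 0"
    and "\<forall>i j. w i j / B j \<le> \<delta> / real CARD('m)"
    and "basic_optimal_solution v w B xs"
  shows "(\<Sum>i\<in>UNIV. round_down xs i * v i) \<ge> (1 - \<delta>) * (\<Sum>i\<in>UNIV. xs $ i * v i)
         \<and> (\<forall>j. (\<Sum>i\<in>UNIV. w i j * round_down xs i) \<le> B j)"
proof -
  note dpos = assms(1) and vnn = assms(2) and wnn = assms(3) and Bpos = assms(4) and qmax = assms(5)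
  define P where "P = knapsack_LP_polytope w B"
  have ext: "xs extreme_point_of P" and opt: "\<And>y. y \<in> P \<Longrightarrow> LP_value v y \<le> LP_value v xs"
    using assms(6) unfolding basic_optimal_solution_def P_def by auto
  have xsP: "xs \<in> P" using ext unfolding extreme_point_of_def by blast
  have x01: "0 \<le> xs$i" "xs$i \<le> 1" for i using xsP by (auto simp: P_def knapsack_LP_polytope_def)
  have xw: "(\<Sum>i\<in>UNIV. w i j * xs$i) \<le> B j" for j using xsP by (auto simp: P_def knapsack_LP_polytope_def)
  have rd: "0 \<le> round_down xs i" "round_down xs i \<le> xs$i" for i
    using x01[of i] by (auto simp: round_down_def)
  have part2: "\<forall>j. (\<Sum>i\<in>UNIV. w i j * round_down xs i) \<le> B j"
  proof
    fix j
    have "(\<Sum>i\<in>UNIV. w i j * round_down xs i) \<le> (\<Sum>i\<in>UNIV. w i j * xs$i)"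
      by (rule sum_mono) (use rd wnn in \<open>auto intro: mult_left_mono\<close>)
    thus "(\<Sum>i\<in>UNIV. w i j * round_down xs i) \<le> B j" using xw[of j] by linarith
  qed
  define OPT where "OPT = (\<Sum>i\<in>UNIV. xs $ i * v i)"
  have OPT_eq: "LP_value v xs = OPT" unfolding LP_value_def OPT_def by (simp add: mult.commute)
  have OPT_nn: "OPT \<ge> 0" unfolding OPT_def using x01 vnn by (auto intro: sum_nonneg)
  have lhs_nn: "(\<Sum>i\<in>UNIV. round_down xs i * v i) \<ge> 0" using rd vnn by (auto intro: sum_nonneg)
  have part1: "(\<Sum>i\<in>UNIV. round_down xs i * v i) \<ge> (1 - \<delta>) * OPT"
  proof (cases "\<delta> \<ge> 1")
    case True
    have "(1 - \<delta>) * OPT \<le> 0" using True OPT_nn by (simp add: mult_nonpos_nonneg)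
    thus ?thesis using lhs_nn by linarith
  next
    case False
    hence dl1: "\<delta> < 1" by simp
    define m where "m = real CARD('m)"
    have m1: "m \<ge> 1" unfolding m_def by simp
    define F where "F = {i. 0 < xs$i \<and> xs$i < 1}"
    have cardF: "card F \<le> CARD('m)"
      using frac_card[of xs w B] ext unfolding F_def P_def knapsack_LP_polytope_def by simp
    have wsmall: "w i j \<le> \<delta> / m * B j" for i j
      using qmax Bpos by (auto simp: m_def pos_divide_le_eq)
    have vbound: "v i \<le> \<delta> / m * OPT" if "i \<in> F" for i
    proof -
      define s where "s = 1 - xs$i"
      have s: "0 < s" "s \<le> 1" using that x01[of i] by (auto simp: s_def F_def)
      define t where "t = \<delta> / m * s"
      have t: "0 \<le> t" "t \<le> 1"
      proof -
        show "0 \<le> t" using s dpos m1 by (simp add: t_def)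
        have "\<delta> / m \<le> 1" using dl1 m1 dpos by (simp add: divide_le_eq)
        thus "t \<le> 1" using s dpos m1 unfolding t_def by (metis mult_le_one less_imp_le divide_nonneg_nonneg order.trans zero_le_one)
      qed
      define y :: "real^'n" where "y = (1 - t) *\<^sub>R xs + s *\<^sub>R axis i 1"
      have yc: "y$k = (1 - t) * xs$k + (if k = i then s else 0)" for k
        by (simp add: y_def axis_def)
      have "y \<in> P"
      proof -
        have "0 \<le> y$k \<and> y$k \<le> 1" for k
        proof -
          have "(1 - t) * xs$k \<le> xs$k" using t x01[of k] by (simp add: mult_left_le_one_le)
          moreover have "0 \<le> (1 - t) * xs$k" using t x01[of k] by simp
          ultimately show ?thesis using x01[of k] s unfolding yc by (auto simp: s_def)
        qed
        moreover have "(\<Sum>k\<in>UNIV. w k j * y$k) \<le> B j" for j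
        proof -
          have "(\<Sum>k\<in>UNIV. w k j * y$k) = (1 - t) * (\<Sum>k\<in>UNIV. w k j * xs$k) + (\<Sum>k\<in>UNIV. if k = i then w k j * s else 0)"
          proof -
            have "(\<Sum>k\<in>UNIV. w k j * y$k) = (\<Sum>k\<in>UNIV. (1 - t) * (w k j * xs$k) + (if k = i then w k j * s else 0))"
              by (rule sum.cong) (auto simp: yc algebra_simps)
            thus ?thesis by (simp add: sum.distrib sum_distrib_left)
          qed
          also have "\<dots> = (1 - t) * (\<Sum>k\<in>UNIV. w k j * xs$k) + s * w i j" by simp
          also have "\<dots> \<le> (1 - t) * B j + s * (\<delta> / m * B j)"
            using xw[of j] t s wsmall[of i j] by (intro add_mono mult_left_mono) auto
          also have "\<dots> = B j" by (simp add: t_def algebra_simps)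
          finally show ?thesis .
        qed
        ultimately show ?thesis by (simp add: P_def knapsack_LP_polytope_def)
      qed
      hence "LP_value v y \<le> OPT" using opt OPT_eq by fastforce
      moreover have "LP_value v y = (1 - t) * OPT + s * v i"
      proof -
        have "LP_value v y = (1 - t) * (\<Sum>k\<in>UNIV. xs$k * v k) + (\<Sum>k\<in>UNIV. if k = i then s * v k else 0)"
        proof -
          have "LP_value v y = (\<Sum>k\<in>UNIV. (1 - t) * (xs$k * v k) + (if k = i then s * v k else 0))"
            unfolding LP_value_def by (rule sum.cong) (auto simp: yc algebra_simps)
          thus ?thesis by (simp add: sum.distrib sum_distrib_left)
        qed
        thus ?thesis by (simp add: OPT_def)
      qed
      ultimately have "s * v i \<le> s * (\<delta> / m * OPT)" by (simp add: t_def algebra_simps)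
      thus ?thesis using s by (metis mult_le_cancel_left_pos)
    qed
    have pt: "xs$i * v i - round_down xs i * v i \<le> (if i \<in> F then \<delta> / m * OPT else 0)" for i
    proof (cases "i \<in> F")
      case True
      have "xs$i * v i \<le> v i" using x01[of i] vnn by (simp add: mult_left_le_one_le)
      moreover have "0 \<le> round_down xs i * v i" using rd[of i] vnn by simp
      ultimately show ?thesis using True vbound[OF True] by simp
    next
      case False
      hence "xs$i = 0 \<or> xs$i = 1" using x01[of i] by (auto simp: F_def)
      thus ?thesis using False by (auto simp: round_down_def)
    qed
    have "OPT - (\<Sum>i\<in>UNIV. round_down xs i * v i) = (\<Sum>i\<in>UNIV. xs$i * v i - round_down xs i * v i)"
      by (simp add: OPT_def sum_subtractf)
    also have "\<dots> \<le> (\<Sum>i\<in>UNIV. if i \<in> F then \<delta> / m * OPT else 0)" by (rule sum_mono) (rule pt)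
    also have "\<dots> = real (card F) * (\<delta> / m * OPT)" by (simp add: sum.If_cases)
    also have "\<dots> \<le> m * (\<delta> / m * OPT)"
      using cardF OPT_nn dpos m1 by (intro mult_right_mono) (auto simp: m_def)
    also have "\<dots> = \<delta> * OPT" using m1 by simp
    finally show ?thesis by (simp add: algebra_simps)
  qed
  show ?thesis using part1 part2 by (simp add: OPT_def)
qed

end
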